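(* Let $V\subseteq\mathbb{R}^d$ be a finite set containing at least two distinct points, and let $p\in V$. Then $$\Pr_{(i,\theta)\sim D_2(V)}\big[\theta\text{ lies between }0\text{ and }p_i\big]\le\frac{2\|p\|_2^2}{L_2(V)}.$$
   Context: For each dimension $i$, let $\ell_i=\min_{v\in V}v_i$, $u_i=\max_{v\in V}v_i$, and let $\mathcal{I}_i$ be the set of consecutive intervals $[a,b]$ (with $a<b$) into which $[\ell_i,u_i]$ is partitioned by the projections $\{v_i:v\in V\}$. Let $\mathcal{I}_{\mathrm{all}}(V)=\{(i,[a,b]):i\in[d],[a,b]\in\mathcal{I}_i\}$ and $L_2(V)=\sum_{(i,[a,b])\in\mathcal{I}_{\mathrm{all}}(V)}(b-a)^2$. The distribution $D_2(V)$ over threshold cuts $(i,\theta)$: choose $(i,[a,b])\in\mathcal{I}_{\mathrm{all}}(V)$ with probability $(b-a)^2/L_2(V)$, then choose $\theta\in[a,b]$ with density $P_{a,b}(\theta)=\frac{4}{(b-a)^2}\min(\theta-a,b-\theta)$. The event in the claim is that the cut $(i,\theta)$ separates the origin from $p$. *)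

theory Defs
  imports "HOL-Analysis.Analysis"
begin

text \<open>Points of R^d are vectors of type real^'n (d = CARD('n)).
  An interval [a,b] is represented by the pair (a,b).\<close>

definition proj :: "(real^'n) set \<Rightarrow> 'n \<Rightarrow> real set" where
  "proj V i = (\<lambda>v. v $ i) ` V"

definition intervals_i :: "(real^'n) set \<Rightarrow> 'n \<Rightarrow> (real \<times> real) set" where
  "intervals_i V i = {(a,b). a \<in> proj V i \<and> b \<in> proj V i \<and> a < b \<and>
                        \<not> (\<exists>c \<in> proj V i. a < c \<and> c < b)}"

definition intervals_all :: "(real^'n) set \<Rightarrow> ('n \<times> (real \<times> real)) set" where
  "intervals_all V = {(i, ab). ab \<in> intervals_i V i}"

definition L2 :: "(real^'n) set \<Rightarrow> real" where
  "L2 V = (\<Sum>(i,(a,b)) \<in> intervals_all V. (b - a)^2)"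

definition Pab :: "real \<Rightarrow> real \<Rightarrow> real \<Rightarrow> real" where
  "Pab a b \<theta> = 4 / (b - a)^2 * min (\<theta> - a) (b - \<theta>)"

text \<open>Probability under D_2(V) of an event E on threshold cuts (i,theta):
  choose (i,[a,b]) with probability (b-a)^2/L_2(V), then theta in [a,b] with density Pab a b.\<close>
definition D2_prob :: "(real^'n) set \<Rightarrow> ('n \<Rightarrow> real \<Rightarrow> bool) \<Rightarrow> real" where
  "D2_prob V E = (\<Sum>(i,(a,b)) \<in> intervals_all V.
      (b - a)^2 / L2 V * integral {a..b} (\<lambda>\<theta>. indicator {\<theta>. E i \<theta>} \<theta> * Pab a b \<theta>))"

definition between0 :: "real \<Rightarrow> real \<Rightarrow> bool" where
  "between0 x \<theta> \<longleftrightarrow> min 0 x \<le> \<theta> \<and> \<theta> \<le> max 0 x"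

end

theory Submission
  imports Defs
begin

lemma consec_disjoint:
  assumes "(a,b) \<in> intervals_i V i" "(a',b') \<in> intervals_i V i" "(a,b) \<noteq> (a',b')"
  shows "b \<le> a' \<or> b' \<le> a"
proof -
  have h: "a \<in> proj V i" "b \<in> proj V i" "a < b" "\<not> (\<exists>c \<in> proj V i. a < c \<and> c < b)"
    "a' \<in> proj V i" "b' \<in> proj V i" "a' < b'" "\<not> (\<exists>c \<in> proj V i. a' < c \<and> c < b')"
    using assms(1,2) unfolding intervals_i_def by auto
  show ?thesis
  proof (cases "a = a'")
    case True
    then have "b \<noteq> b'" using assms(3) by auto
    then show ?thesis using h True by (metis linorder_neqE_linordered_idom)
  next
    case False
    then show ?thesis using h by (metis linorder_neqE_linordered_idom not_less)
  qed
qed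

lemma finite_intervals_i:
  assumes "finite V"
  shows "finite (intervals_i V i)"
proof -
  have "intervals_i V i \<subseteq> proj V i \<times> proj V i" unfolding intervals_i_def by auto
  moreover have "finite (proj V i \<times> proj V i)" using assms unfolding proj_def by auto
  ultimately show ?thesis by (rule finite_subset)
qed

lemma term_bound:
  assumes "(a,b) \<in> intervals_i V i" "q \<in> proj V i"
  shows "(b-a)^2 * integral {a..b} (\<lambda>\<theta>. indicator {\<theta>. between0 q \<theta>} \<theta> * Pab a b \<theta>)
     \<le> 4 * integral {max a (min 0 q)..min b (max 0 q)} (\<lambda>\<theta>. \<bar>\<theta> - q\<bar>)"
proof -
  have h: "a < b" "\<not> (\<exists>c \<in> proj V i. a < c \<and> c < b)"
    using assms(1) unfolding intervals_i_def by auto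
  define S where "S = {max a (min 0 q)..min b (max 0 q)}"
  have e1: "(\<lambda>\<theta>. indicator {\<theta>. between0 q \<theta>} \<theta> * Pab a b \<theta>)
     = (\<lambda>\<theta>. if \<theta> \<in> {min 0 q..max 0 q} then Pab a b \<theta> else 0)"
    by (auto simp: indicator_def between0_def)
  have e2: "integral {a..b} (\<lambda>\<theta>. indicator {\<theta>. between0 q \<theta>} \<theta> * Pab a b \<theta>) = integral S (Pab a b)"
    unfolding e1 integral_restrict_Int S_def by (simp add: Int_atLeastAtMost max.commute min.commute)
  have e3: "integral S (Pab a b) = 4 / (b-a)^2 * integral S (\<lambda>\<theta>. min (\<theta> - a) (b - \<theta>))"
    unfolding Pab_def by (rule integral_mult_right)
  have le: "integral S (\<lambda>\<theta>. min (\<theta> - a) (b - \<theta>)) \<le> integral S (\<lambda>\<theta>. \<bar>\<theta> - q\<bar>)"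
  proof (rule integral_le)
    show "(\<lambda>\<theta>. min (\<theta> - a) (b - \<theta>)) integrable_on S" unfolding S_def
      by (intro integrable_continuous_interval continuous_intros)
    show "(\<lambda>\<theta>. \<bar>\<theta> - q\<bar>) integrable_on S" unfolding S_def
      by (intro integrable_continuous_interval continuous_intros)
    fix x assume "x \<in> S"
    then have "a \<le> x" "x \<le> b" unfolding S_def by auto
    have "\<not> (a < q \<and> q < b)" using h assms(2) by auto
    then show "min (x - a) (b - x) \<le> \<bar>x - q\<bar>" using \<open>a \<le> x\<close> \<open>x \<le> b\<close> by auto
  qed
  have "(b-a)^2 * (4 / (b-a)^2 * integral S (\<lambda>\<theta>. min (\<theta> - a) (b - \<theta>)))
       = 4 * integral S (\<lambda>\<theta>. min (\<theta> - a) (b - \<theta>))" using h(1) by simp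
  then show ?thesis unfolding e2 e3 using le S_def by simp
qed

lemma abs_integral:
  fixes q :: real
  shows "((\<lambda>\<theta>. \<bar>\<theta> - q\<bar>) has_integral q^2/2) {min 0 q..max 0 q}"
proof (cases "q \<ge> 0")
  case True
  have "((\<lambda>\<theta>. \<bar>\<theta> - q\<bar>) has_integral ((\<lambda>x. q*x - x^2/2) q - (\<lambda>x. q*x - x^2/2) 0)) {0..q}"
  proof (rule fundamental_theorem_of_calculus)
    show "0 \<le> q" using True .
    fix x assume "x \<in> {0..q}"
    then have "\<bar>x - q\<bar> = q - x" by auto
    moreover have "((\<lambda>x. q*x - x^2/2) has_real_derivative (q - x)) (at x within {0..q})"
      by (auto intro!: derivative_eq_intros)
    ultimately show "((\<lambda>x. q*x - x^2/2) has_vector_derivative \<bar>x - q\<bar>) (at x within {0..q})"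
      by (simp add: has_real_derivative_iff_has_vector_derivative)
  qed
  then show ?thesis using True by (simp add: power2_eq_square)
next
  case False
  have "((\<lambda>\<theta>. \<bar>\<theta> - q\<bar>) has_integral ((\<lambda>x. x^2/2 - q*x) 0 - (\<lambda>x. x^2/2 - q*x) q)) {q..0}"
  proof (rule fundamental_theorem_of_calculus)
    show "q \<le> 0" using False by simp
    fix x assume "x \<in> {q..0}"
    then have "\<bar>x - q\<bar> = x - q" by auto
    moreover have "((\<lambda>x. x^2/2 - q*x) has_real_derivative (x - q)) (at x within {q..0})"
      by (auto intro!: derivative_eq_intros)
    ultimately show "((\<lambda>x. x^2/2 - q*x) has_vector_derivative \<bar>x - q\<bar>) (at x within {q..0})"
      by (simp add: has_real_derivative_iff_has_vector_derivative)
  qed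
  then show ?thesis using False by (simp add: power2_eq_square)
qed

lemma sum_bound:
  assumes "finite V" "q \<in> proj V i"
  shows "(\<Sum>(a,b) \<in> intervals_i V i. integral {max a (min 0 q)..min b (max 0 q)} (\<lambda>\<theta>. \<bar>\<theta> - q\<bar>))
     \<le> q^2/2"
proof -
  define T where "T = (\<lambda>ab::real\<times>real. {max (fst ab) (min 0 q)..min (snd ab) (max 0 q)})"
  define g where "g = (\<lambda>ab. integral (T ab) (\<lambda>\<theta>. \<bar>\<theta> - q\<bar>))"
  have "((\<lambda>\<theta>. \<bar>\<theta> - q\<bar>) has_integral (sum g (intervals_i V i))) (\<Union>ab\<in>intervals_i V i. T ab)"
  proof (rule has_integral_UN)
    show "finite (intervals_i V i)" using assms(1) by (rule finite_intervals_i)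
    fix ab show "((\<lambda>\<theta>. \<bar>\<theta> - q\<bar>) has_integral g ab) (T ab)"
      unfolding g_def T_def
      by (intro integrable_integral integrable_continuous_interval continuous_intros)
  next
    show "pairwise (\<lambda>i i'. negligible (T i \<inter> T i')) (intervals_i V i)"
    proof (rule pairwiseI)
      fix x y assume xy: "x \<in> intervals_i V i" "y \<in> intervals_i V i" "x \<noteq> y"
      obtain a b a' b' where x: "x = (a,b)" and y: "y = (a',b')" by fastforce
      have d: "b \<le> a' \<or> b' \<le> a" using consec_disjoint xy x y by blast
      have "T x \<inter> T y \<subseteq> {a'} \<union> {a}"
        using d unfolding T_def x y by auto
      then show "negligible (T x \<inter> T y)"
        by (rule negligible_subset[rotated]) auto
    qed
  qed
  moreover have "(\<Union>ab\<in>intervals_i V i. T ab) \<subseteq> {min 0 q..max 0 q}"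
    unfolding T_def by auto
  ultimately have "sum g (intervals_i V i) \<le> q^2/2"
    using has_integral_subset_le abs_integral by (metis abs_ge_zero)
  then show ?thesis unfolding g_def T_def by (simp add: case_prod_beta)
qed

theorem lemma4p3:
  fixes V :: "(real^'n) set" and p :: "real^'n"
  assumes "finite V" and "\<exists>x\<in>V. \<exists>y\<in>V. x \<noteq> y" and "p \<in> V"
  shows "D2_prob V (\<lambda>i \<theta>. between0 (p $ i) \<theta>) \<le> 2 * (norm p)^2 / L2 V"
proof -
  define F where "F = (\<lambda>i (a::real,b::real). (b-a)^2 * integral {a..b}
     (\<lambda>\<theta>. indicator {\<theta>. between0 (p $ i) \<theta>} \<theta> * Pab a b \<theta>))"
  have IA: "intervals_all V = Sigma UNIV (intervals_i V)"
    unfolding intervals_all_def by auto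
  have fin: "\<And>i. finite (intervals_i V i)" using assms(1) by (rule finite_intervals_i)
  have L2nn: "0 \<le> L2 V" unfolding L2_def by (intro sum_nonneg) auto
  have "D2_prob V (\<lambda>i \<theta>. between0 (p $ i) \<theta>) = (\<Sum>(i,ab) \<in> intervals_all V. F i ab) / L2 V"
    unfolding D2_prob_def F_def sum_divide_distrib
    by (intro sum.cong refl) (auto simp: case_prod_beta)
  also have "(\<Sum>(i,ab) \<in> intervals_all V. F i ab) = (\<Sum>i\<in>UNIV. \<Sum>ab\<in>intervals_i V i. F i ab)"
    unfolding IA using fin by (subst sum.Sigma) auto
  also have "\<dots> \<le> (\<Sum>i\<in>UNIV. 2 * (p $ i)^2)"
  proof (rule sum_mono)
    fix i
    have q: "p $ i \<in> proj V i" using assms(3) unfolding proj_def by auto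
    have "(\<Sum>ab\<in>intervals_i V i. F i ab) \<le> (\<Sum>(a,b)\<in>intervals_i V i.
        4 * integral {max a (min 0 (p$i))..min b (max 0 (p$i))} (\<lambda>\<theta>. \<bar>\<theta> - p$i\<bar>))"
      unfolding F_def using term_bound[OF _ q] by (intro sum_mono) (auto simp: case_prod_beta)
    also have "\<dots> = 4 * (\<Sum>(a,b)\<in>intervals_i V i.
        integral {max a (min 0 (p$i))..min b (max 0 (p$i))} (\<lambda>\<theta>. \<bar>\<theta> - p$i\<bar>))"
      by (simp add: sum_distrib_left case_prod_beta)
    also have "\<dots> \<le> 4 * ((p$i)^2/2)"
      using sum_bound[OF assms(1) q] by simp
    finally show "(\<Sum>ab\<in>intervals_i V i. F i ab) \<le> 2 * (p $ i)^2" by simp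
  qed
  also have "(\<Sum>i\<in>UNIV. 2 * (p $ i)^2) = 2 * (norm p)^2"
  proof -
    have "(norm p)^2 = p \<bullet> p" by (simp add: power2_norm_eq_inner)
    also have "\<dots> = (\<Sum>i\<in>UNIV. (p $ i)^2)" by (simp add: inner_vec_def power2_eq_square)
    finally show ?thesis by (simp add: sum_distrib_left)
  qed
  finally show ?thesis using L2nn by (simp add: divide_right_mono)
qed

end
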